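(* Let $Q$ be a groupoid quantale with base locale $A$, and let $G$ be its associated involutive localic graph, consisting of the locales $G_0,G_1,G_2$ and the maps $d,r,i,u,m$ described in the context. Then $G$ is an open localic groupoid.
   Context: Let $A$ be a locale (frame), whose multiplication is $\wedge$. An $A$-$A$-bimodule is a sup-lattice $M$ with actions $(a,m)\mapsto a\triangleright m$ and $(m,a)\mapsto m\triangleleft a$ ($a\in A$, $m\in M$), each preserving arbitrary joins in each variable, such that $1_A\triangleright m=m$, $(a\wedge b)\triangleright m=a\triangleright(b\triangleright m)$, $m\triangleleft 1_A=m$, $m\triangleleft(a\wedge b)=(m\triangleleft a)\triangleleft b$, and $(a\triangleright m)\triangleleft b=a\triangleright(m\triangleleft b)$. An $A$-$A$-quantale is an $A$-$A$-bimodule $Q$ with an associative multiplication $(x,y)\mapsto xy$ preserving arbitrary joins in each variable, such that $(a\triangleright x)y=a\triangleright(xy)$, $(x\triangleleft a)y=x(a\triangleright y)$, $(xy)\triangleleft a=x(y\triangleleft a)$. It is involutive if it has a join-preserving map $x\mapsto x^*$ with $x^{**}=x$, $(xy)^*=y^*x^*$ and $(a\triangleright(x\triangleleft b))^*=b\triangleright(x^*\triangleleft a)$. $1_Q$ is the top of $Q$. A support is a join-preserving map $\varsigma:Q\to A$ with $\varsigma(1_Q)=1_A$, $\varsigma(x)\triangleright y\le xx^*y$ and $\varsigma(x)\triangleright x=x$ for all $x,y\in Q$; it is equivariant if $\varsigma(a\triangleright x)=a\wedge\varsigma(x)$ for all $a\in A,x\in Q$. A based quantal frame is an involutive $A$-$A$-quantale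 whose underlying lattice is a frame and such that $(a\triangleright x)\wedge y=a\triangleright(x\wedge y)$ and $(x\triangleleft a)\wedge y=(x\wedge y)\triangleleft a$. It is reflexive if equipped with a frame homomorphism $\upsilon:Q\to A$ with $\upsilon(a\triangleright 1_Q)=a=\upsilon(1_Q\triangleleft a)$ for all $a\in A$. Let $Q\otimes_A Q$ be the quotient of the sup-lattice tensor product $Q\otimes Q$ by the relations $x\otimes(a\triangleright y)=(x\triangleleft a)\otimes y$; the multiplication factors as a sup-lattice homomorphism $\mu_A:Q\otimes_AQ\to Q$, $x\otimes y\mapsto xy$, and $Q$ is multiplicative if the right adjoint of $\mu_A$ preserves arbitrary joins. $Q$ satisfies the unit laws if $\bigvee_{xy\le a}\upsilon(x)\triangleright y=a$ for all $a\in Q$, and the inverse law if $\upsilon(a)\triangleright 1_Q=\bigvee_{xy^*\le a}x\wedge y$ for all $a\in Q$. A groupoid quantale is a multiplicative, equivariantly supported, reflexive based quantal frame satisfying the unit laws and the inverse law. Its associated involutive localic graph: locales $G_0,G_1$ with $\mathcal O(G_0)=A$, $\mathcal O(G_1)=Q$; $d:G_1\to G_0$ with $d^*(a)=a\triangleright 1_Q$; $i:G_1\to G_1$ with $i^*(x)=x^*$; $r=d\circ i$; $u:G_0\to G_1$ with $u^*=\upsilon$; $G_2$ the pullback of $r$ (via the first projection) and $d$ (via the second), with $\mathcal O(G_2)=Q\otimes_AQ$; and $m:G_2\to G_1$ with $m^*(a)=\bigvee_{xy\le a}x\otimes y$. A localic groupoid is open if $d$ is an open map. *)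

theory Defs
  imports Main
begin

text \<open>A locale is identified with its frame of opens; a locale map f : X -> Y is represented
  by its inverse image frame homomorphism f* : O(Y) -> O(X).\<close>

class frame = complete_lattice +
  assumes inf_Sup_frame: "inf x (Sup S) = (SUP y\<in>S. inf x y)"

definition frame_hom_into ::
  "'y set \<Rightarrow> ('y set \<Rightarrow> 'y) \<Rightarrow> ('y \<Rightarrow> 'y \<Rightarrow> 'y) \<Rightarrow> 'y \<Rightarrow> ('x::complete_lattice \<Rightarrow> 'y) \<Rightarrow> bool" where
  "frame_hom_into C Sup' inf' top' f \<longleftrightarrow>
     (\<forall>x. f x \<in> C) \<and> (\<forall>X. f (Sup X) = Sup' (f ` X)) \<and>
     (\<forall>x y. f (inf x y) = inf' (f x) (f y)) \<and> f top = top'"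

definition frame_hom :: "('x::complete_lattice \<Rightarrow> 'y::complete_lattice) \<Rightarrow> bool" where
  "frame_hom f \<longleftrightarrow> frame_hom_into UNIV Sup inf top f"

text \<open>Open locale map (Joyal--Tierney), in terms of its inverse image f*: f* has a left
  adjoint f_! satisfying the Frobenius reciprocity condition.\<close>
definition open_map :: "('y::complete_lattice \<Rightarrow> 'x::complete_lattice) \<Rightarrow> bool" where
  "open_map fstar \<longleftrightarrow>
     (\<exists>fl :: 'x \<Rightarrow> 'y. (\<forall>x b. fl x \<le> b \<longleftrightarrow> x \<le> fstar b) \<and>
                    (\<forall>x b. fl (inf x (fstar b)) = inf (fl x) b))"

text \<open>Parameters: l = left action (a,m) |-> a |> m, r = right action (m,a) |-> m <| a,
  mult = multiplication of Q, invl = involution. The base locale A has multiplication inf and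
  unit top; 1_Q = top.\<close>

definition AA_bimodule :: "('a::frame \<Rightarrow> 'q::complete_lattice \<Rightarrow> 'q) \<Rightarrow> ('q \<Rightarrow> 'a \<Rightarrow> 'q) \<Rightarrow> bool" where
  "AA_bimodule l r \<longleftrightarrow>
     (\<forall>S m. l (Sup S) m = (SUP a\<in>S. l a m)) \<and> (\<forall>a M. l a (Sup M) = (SUP m\<in>M. l a m)) \<and>
     (\<forall>M a. r (Sup M) a = (SUP m\<in>M. r m a)) \<and> (\<forall>m S. r m (Sup S) = (SUP a\<in>S. r m a)) \<and>
     (\<forall>m. l top m = m) \<and> (\<forall>a b m. l (inf a b) m = l a (l b m)) \<and>
     (\<forall>m. r m top = m) \<and> (\<forall>a b m. r m (inf a b) = r (r m a) b) \<and>
     (\<forall>a m b. r (l a m) b = l a (r m b))"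

definition AA_quantale ::
  "('a::frame \<Rightarrow> 'q::complete_lattice \<Rightarrow> 'q) \<Rightarrow> ('q \<Rightarrow> 'a \<Rightarrow> 'q) \<Rightarrow> ('q \<Rightarrow> 'q \<Rightarrow> 'q) \<Rightarrow> bool" where
  "AA_quantale l r mult \<longleftrightarrow> AA_bimodule l r \<and>
     (\<forall>x y z. mult (mult x y) z = mult x (mult y z)) \<and>
     (\<forall>X y. mult (Sup X) y = (SUP x\<in>X. mult x y)) \<and>
     (\<forall>x Y. mult x (Sup Y) = (SUP y\<in>Y. mult x y)) \<and>
     (\<forall>a x y. mult (l a x) y = l a (mult x y)) \<and>
     (\<forall>x a y. mult (r x a) y = mult x (l a y)) \<and>
     (\<forall>x y a. r (mult x y) a = mult x (r y a))"

definition involutive_AA_quantale ::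
  "('a::frame \<Rightarrow> 'q::complete_lattice \<Rightarrow> 'q) \<Rightarrow> ('q \<Rightarrow> 'a \<Rightarrow> 'q) \<Rightarrow> ('q \<Rightarrow> 'q \<Rightarrow> 'q) \<Rightarrow> ('q \<Rightarrow> 'q) \<Rightarrow> bool" where
  "involutive_AA_quantale l r mult invl \<longleftrightarrow> AA_quantale l r mult \<and>
     (\<forall>X. invl (Sup X) = (SUP x\<in>X. invl x)) \<and> (\<forall>x. invl (invl x) = x) \<and>
     (\<forall>x y. invl (mult x y) = mult (invl y) (invl x)) \<and>
     (\<forall>a x b. invl (l a (r x b)) = l b (r (invl x) a))"

definition support ::
  "('a::frame \<Rightarrow> 'q::complete_lattice \<Rightarrow> 'q) \<Rightarrow> ('q \<Rightarrow> 'q \<Rightarrow> 'q) \<Rightarrow> ('q \<Rightarrow> 'q) \<Rightarrow> ('q \<Rightarrow> 'a) \<Rightarrow> bool" where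
  "support l mult invl s \<longleftrightarrow>
     (\<forall>X. s (Sup X) = (SUP x\<in>X. s x)) \<and> s top = top \<and>
     (\<forall>x y. l (s x) y \<le> mult (mult x (invl x)) y) \<and> (\<forall>x. l (s x) x = x)"

definition equivariant_support ::
  "('a::frame \<Rightarrow> 'q::complete_lattice \<Rightarrow> 'q) \<Rightarrow> ('q \<Rightarrow> 'q \<Rightarrow> 'q) \<Rightarrow> ('q \<Rightarrow> 'q) \<Rightarrow> ('q \<Rightarrow> 'a) \<Rightarrow> bool" where
  "equivariant_support l mult invl s \<longleftrightarrow> support l mult invl s \<and> (\<forall>a x. s (l a x) = inf a (s x))"

text \<open>Based quantal frame: the underlying lattice of Q is a frame (type class).\<close>
definition based_quantal_frame ::
  "('a::frame \<Rightarrow> 'q::frame \<Rightarrow> 'q) \<Rightarrow> ('q \<Rightarrow> 'a \<Rightarrow> 'q) \<Rightarrow> ('q \<Rightarrow> 'q \<Rightarrow> 'q) \<Rightarrow> ('q \<Rightarrow> 'q) \<Rightarrow> bool" where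
  "based_quantal_frame l r mult invl \<longleftrightarrow> involutive_AA_quantale l r mult invl \<and>
     (\<forall>a x y. inf (l a x) y = l a (inf x y)) \<and> (\<forall>x a y. inf (r x a) y = r (inf x y) a)"

definition reflexive_bqf ::
  "('a::frame \<Rightarrow> 'q::frame \<Rightarrow> 'q) \<Rightarrow> ('q \<Rightarrow> 'a \<Rightarrow> 'q) \<Rightarrow> ('q \<Rightarrow> 'q \<Rightarrow> 'q) \<Rightarrow> ('q \<Rightarrow> 'q) \<Rightarrow> ('q \<Rightarrow> 'a) \<Rightarrow> bool" where
  "reflexive_bqf l r mult invl ups \<longleftrightarrow> based_quantal_frame l r mult invl \<and> frame_hom ups \<and>
     (\<forall>a. ups (l a top) = a \<and> ups (r top a) = a)"

text \<open>Concrete presentation of the sup-lattice tensor product Q \<otimes> Q (Joyal--Tierney):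
  the subsets of Q \<times> Q that are down-closed and closed under joins in each variable
  separately (with x \<otimes> y \<le> S iff (x,y) \<in> S). The quotient Q \<otimes>_A Q by the relations
  x \<otimes> (a |> y) = (x <| a) \<otimes> y consists of the elements saturated for these relations.\<close>

definition tensA_closed :: "('a::frame \<Rightarrow> 'q::complete_lattice \<Rightarrow> 'q) \<Rightarrow> ('q \<Rightarrow> 'a \<Rightarrow> 'q) \<Rightarrow> ('q \<times> 'q) set \<Rightarrow> bool" where
  "tensA_closed l r S \<longleftrightarrow>
     (\<forall>x y x' y'. (x,y) \<in> S \<longrightarrow> x' \<le> x \<longrightarrow> y' \<le> y \<longrightarrow> (x',y') \<in> S) \<and>
     (\<forall>X y. (\<forall>x\<in>X. (x,y) \<in> S) \<longrightarrow> (Sup X, y) \<in> S) \<and>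
     (\<forall>x Y. (\<forall>y\<in>Y. (x,y) \<in> S) \<longrightarrow> (x, Sup Y) \<in> S) \<and>
     (\<forall>x a y. (x, l a y) \<in> S \<longleftrightarrow> (r x a, y) \<in> S)"

text \<open>O(G_2) = Q \<otimes>_A Q, ordered by inclusion.\<close>
definition OG2 :: "('a::frame \<Rightarrow> 'q::complete_lattice \<Rightarrow> 'q) \<Rightarrow> ('q \<Rightarrow> 'a \<Rightarrow> 'q) \<Rightarrow> ('q \<times> 'q) set set" where
  "OG2 l r = {S. tensA_closed l r S}"

definition Sup2 :: "('a::frame \<Rightarrow> 'q::complete_lattice \<Rightarrow> 'q) \<Rightarrow> ('q \<Rightarrow> 'a \<Rightarrow> 'q) \<Rightarrow> ('q \<times> 'q) set set \<Rightarrow> ('q \<times> 'q) set" where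
  "Sup2 l r SS = \<Inter>{S \<in> OG2 l r. \<Union>SS \<subseteq> S}"

definition tens :: "('a::frame \<Rightarrow> 'q::complete_lattice \<Rightarrow> 'q) \<Rightarrow> ('q \<Rightarrow> 'a \<Rightarrow> 'q) \<Rightarrow> 'q \<Rightarrow> 'q \<Rightarrow> ('q \<times> 'q) set" where
  "tens l r x y = Sup2 l r {{(x,y)}}"

definition tens3_closed :: "('a::frame \<Rightarrow> 'q::complete_lattice \<Rightarrow> 'q) \<Rightarrow> ('q \<Rightarrow> 'a \<Rightarrow> 'q) \<Rightarrow> ('q \<times> 'q \<times> 'q) set \<Rightarrow> bool" where
  "tens3_closed l r S \<longleftrightarrow>
     (\<forall>x y z x' y' z'. (x,y,z) \<in> S \<longrightarrow> x' \<le> x \<longrightarrow> y' \<le> y \<longrightarrow> z' \<le> z \<longrightarrow> (x',y',z') \<in> S) \<and>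
     (\<forall>X y z. (\<forall>x\<in>X. (x,y,z) \<in> S) \<longrightarrow> (Sup X, y, z) \<in> S) \<and>
     (\<forall>x Y z. (\<forall>y\<in>Y. (x,y,z) \<in> S) \<longrightarrow> (x, Sup Y, z) \<in> S) \<and>
     (\<forall>x y Z. (\<forall>z\<in>Z. (x,y,z) \<in> S) \<longrightarrow> (x, y, Sup Z) \<in> S) \<and>
     (\<forall>x a y z. (x, l a y, z) \<in> S \<longleftrightarrow> (r x a, y, z) \<in> S) \<and>
     (\<forall>x y a z. (x, y, l a z) \<in> S \<longleftrightarrow> (x, r y a, z) \<in> S)"

text \<open>O(G_3) = Q \<otimes>_A Q \<otimes>_A Q, the frame of the locale G_3 = G_1 \<times>_{G_0} G_1 \<times>_{G_0} G_1.\<close>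
definition OG3 :: "('a::frame \<Rightarrow> 'q::complete_lattice \<Rightarrow> 'q) \<Rightarrow> ('q \<Rightarrow> 'a \<Rightarrow> 'q) \<Rightarrow> ('q \<times> 'q \<times> 'q) set set" where
  "OG3 l r = {S. tens3_closed l r S}"

definition Sup3 :: "('a::frame \<Rightarrow> 'q::complete_lattice \<Rightarrow> 'q) \<Rightarrow> ('q \<Rightarrow> 'a \<Rightarrow> 'q) \<Rightarrow> ('q \<times> 'q \<times> 'q) set set \<Rightarrow> ('q \<times> 'q \<times> 'q) set" where
  "Sup3 l r SS = \<Inter>{S \<in> OG3 l r. \<Union>SS \<subseteq> S}"

definition tens3 :: "('a::frame \<Rightarrow> 'q::complete_lattice \<Rightarrow> 'q) \<Rightarrow> ('q \<Rightarrow> 'a \<Rightarrow> 'q) \<Rightarrow> 'q \<Rightarrow> 'q \<Rightarrow> 'q \<Rightarrow> ('q \<times> 'q \<times> 'q) set" where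
  "tens3 l r x y z = Sup3 l r {{(x,y,z)}}"

text \<open>mu_A : Q \<otimes>_A Q -> Q, x \<otimes> y |-> xy, and its right adjoint.\<close>
definition muA :: "('q::complete_lattice \<Rightarrow> 'q \<Rightarrow> 'q) \<Rightarrow> ('q \<times> 'q) set \<Rightarrow> 'q" where
  "muA mult S = Sup {mult x y | x y. (x,y) \<in> S}"

definition muA_radj ::
  "('a::frame \<Rightarrow> 'q::complete_lattice \<Rightarrow> 'q) \<Rightarrow> ('q \<Rightarrow> 'a \<Rightarrow> 'q) \<Rightarrow> ('q \<Rightarrow> 'q \<Rightarrow> 'q) \<Rightarrow> 'q \<Rightarrow> ('q \<times> 'q) set" where
  "muA_radj l r mult c = Sup2 l r {S \<in> OG2 l r. muA mult S \<le> c}"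

definition multiplicative ::
  "('a::frame \<Rightarrow> 'q::complete_lattice \<Rightarrow> 'q) \<Rightarrow> ('q \<Rightarrow> 'a \<Rightarrow> 'q) \<Rightarrow> ('q \<Rightarrow> 'q \<Rightarrow> 'q) \<Rightarrow> bool" where
  "multiplicative l r mult \<longleftrightarrow>
     (\<forall>C. muA_radj l r mult (Sup C) = Sup2 l r (muA_radj l r mult ` C))"

definition unit_laws ::
  "('a::frame \<Rightarrow> 'q::complete_lattice \<Rightarrow> 'q) \<Rightarrow> ('q \<Rightarrow> 'q \<Rightarrow> 'q) \<Rightarrow> ('q \<Rightarrow> 'a) \<Rightarrow> bool" where
  "unit_laws l mult ups \<longleftrightarrow> (\<forall>a. Sup {l (ups x) y | x y. mult x y \<le> a} = a)"

definition inverse_law ::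
  "('a::frame \<Rightarrow> 'q::complete_lattice \<Rightarrow> 'q) \<Rightarrow> ('q \<Rightarrow> 'q \<Rightarrow> 'q) \<Rightarrow> ('q \<Rightarrow> 'q) \<Rightarrow> ('q \<Rightarrow> 'a) \<Rightarrow> bool" where
  "inverse_law l mult invl ups \<longleftrightarrow>
     (\<forall>a. l (ups a) top = Sup {inf x y | x y. mult x (invl y) \<le> a})"

definition groupoid_quantale ::
  "('a::frame \<Rightarrow> 'q::frame \<Rightarrow> 'q) \<Rightarrow> ('q \<Rightarrow> 'a \<Rightarrow> 'q) \<Rightarrow> ('q \<Rightarrow> 'q \<Rightarrow> 'q) \<Rightarrow> ('q \<Rightarrow> 'q) \<Rightarrow> ('q \<Rightarrow> 'a) \<Rightarrow> bool" where
  "groupoid_quantale l r mult invl ups \<longleftrightarrow>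
     multiplicative l r mult \<and> (\<exists>s. equivariant_support l mult invl s) \<and>
     reflexive_bqf l r mult invl ups \<and> unit_laws l mult ups \<and> inverse_law l mult invl ups"

definition d_star :: "('a::frame \<Rightarrow> 'q::complete_lattice \<Rightarrow> 'q) \<Rightarrow> 'a \<Rightarrow> 'q" where
  "d_star l a = l a top"

definition i_star :: "('q \<Rightarrow> 'q) \<Rightarrow> 'q \<Rightarrow> 'q" where
  "i_star invl = invl"

text \<open>r = d \<circ> i, hence r* = i* \<circ> d*.\<close>
definition r_star :: "('a::frame \<Rightarrow> 'q::complete_lattice \<Rightarrow> 'q) \<Rightarrow> ('q \<Rightarrow> 'q) \<Rightarrow> 'a \<Rightarrow> 'q" where
  "r_star l invl = i_star invl \<circ> d_star l"

definition u_star :: "('q \<Rightarrow> 'a) \<Rightarrow> 'q \<Rightarrow> 'a" where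
  "u_star ups = ups"

definition m_star ::
  "('a::frame \<Rightarrow> 'q::complete_lattice \<Rightarrow> 'q) \<Rightarrow> ('q \<Rightarrow> 'a \<Rightarrow> 'q) \<Rightarrow> ('q \<Rightarrow> 'q \<Rightarrow> 'q) \<Rightarrow> 'q \<Rightarrow> ('q \<times> 'q) set" where
  "m_star l r mult c = Sup2 l r {tens l r x y | x y. mult x y \<le> c}"

definition pi1_star :: "('a::frame \<Rightarrow> 'q::complete_lattice \<Rightarrow> 'q) \<Rightarrow> ('q \<Rightarrow> 'a \<Rightarrow> 'q) \<Rightarrow> 'q \<Rightarrow> ('q \<times> 'q) set" where
  "pi1_star l r x = tens l r x top"

definition pi2_star :: "('a::frame \<Rightarrow> 'q::complete_lattice \<Rightarrow> 'q) \<Rightarrow> ('q \<Rightarrow> 'a \<Rightarrow> 'q) \<Rightarrow> 'q \<Rightarrow> ('q \<times> 'q) set" where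
  "pi2_star l r y = tens l r top y"

text \<open>Given locale maps f, g : X -> G_1 with r \<circ> f = d \<circ> g, the induced map
  \<langle>f,g\<rangle> : X -> G_2 has inverse image x \<otimes> y |-> f*(x) \<and> g*(y), i.e.
  S |-> \<Or>{f*(x) \<and> g*(y) | (x,y) \<in> S}; here O(X) has join SupX and meet infX.\<close>
definition pair_star :: "('x set \<Rightarrow> 'x) \<Rightarrow> ('x \<Rightarrow> 'x \<Rightarrow> 'x) \<Rightarrow> ('q \<Rightarrow> 'x) \<Rightarrow> ('q \<Rightarrow> 'x) \<Rightarrow> ('q \<times> 'q) set \<Rightarrow> 'x" where
  "pair_star SupX infX f g S = SupX {infX (f x) (g y) | x y. (x,y) \<in> S}"

definition p1_star :: "('a::frame \<Rightarrow> 'q::complete_lattice \<Rightarrow> 'q) \<Rightarrow> ('q \<Rightarrow> 'a \<Rightarrow> 'q) \<Rightarrow> 'q \<Rightarrow> ('q \<times> 'q \<times> 'q) set" where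
  "p1_star l r x = tens3 l r x top top"
definition p2_star :: "('a::frame \<Rightarrow> 'q::complete_lattice \<Rightarrow> 'q) \<Rightarrow> ('q \<Rightarrow> 'a \<Rightarrow> 'q) \<Rightarrow> 'q \<Rightarrow> ('q \<times> 'q \<times> 'q) set" where
  "p2_star l r y = tens3 l r top y top"
definition p3_star :: "('a::frame \<Rightarrow> 'q::complete_lattice \<Rightarrow> 'q) \<Rightarrow> ('q \<Rightarrow> 'a \<Rightarrow> 'q) \<Rightarrow> 'q \<Rightarrow> ('q \<times> 'q \<times> 'q) set" where
  "p3_star l r z = tens3 l r top top z"

definition pair3_star :: "('a::frame \<Rightarrow> 'q::complete_lattice \<Rightarrow> 'q) \<Rightarrow> ('q \<Rightarrow> 'a \<Rightarrow> 'q) \<Rightarrow>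
    ('q \<Rightarrow> ('q \<times> 'q \<times> 'q) set) \<Rightarrow> ('q \<Rightarrow> ('q \<times> 'q \<times> 'q) set) \<Rightarrow> ('q \<times> 'q) set \<Rightarrow> ('q \<times> 'q \<times> 'q) set" where
  "pair3_star l r f g = pair_star (Sup3 l r) (\<inter>) f g"

text \<open>p_12 = \<langle>p_1,p_2\<rangle>, p_23 = \<langle>p_2,p_3\<rangle> : G_3 -> G_2;
  m \<times> id = \<langle>m \<circ> p_12, p_3\<rangle> and id \<times> m = \<langle>p_1, m \<circ> p_23\<rangle> : G_3 -> G_2.\<close>
definition m_x_id_star :: "('a::frame \<Rightarrow> 'q::complete_lattice \<Rightarrow> 'q) \<Rightarrow> ('q \<Rightarrow> 'a \<Rightarrow> 'q) \<Rightarrow> ('q \<Rightarrow> 'q \<Rightarrow> 'q) \<Rightarrow>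
    ('q \<times> 'q) set \<Rightarrow> ('q \<times> 'q \<times> 'q) set" where
  "m_x_id_star l r mult = pair3_star l r
     (pair3_star l r (p1_star l r) (p2_star l r) \<circ> m_star l r mult) (p3_star l r)"

definition id_x_m_star :: "('a::frame \<Rightarrow> 'q::complete_lattice \<Rightarrow> 'q) \<Rightarrow> ('q \<Rightarrow> 'a \<Rightarrow> 'q) \<Rightarrow> ('q \<Rightarrow> 'q \<Rightarrow> 'q) \<Rightarrow>
    ('q \<times> 'q) set \<Rightarrow> ('q \<times> 'q \<times> 'q) set" where
  "id_x_m_star l r mult = pair3_star l r (p1_star l r)
     (pair3_star l r (p2_star l r) (p3_star l r) \<circ> m_star l r mult)"

text \<open>All equations are between inverse image homomorphisms, so composites reverse:
  (g \<circ> f)* = f* \<circ> g*.\<close>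
definition assoc_graph_is_localic_groupoid ::
  "('a::frame \<Rightarrow> 'q::frame \<Rightarrow> 'q) \<Rightarrow> ('q \<Rightarrow> 'a \<Rightarrow> 'q) \<Rightarrow> ('q \<Rightarrow> 'q \<Rightarrow> 'q) \<Rightarrow> ('q \<Rightarrow> 'q) \<Rightarrow> ('q \<Rightarrow> 'a) \<Rightarrow> bool" where
  "assoc_graph_is_localic_groupoid l r mult invl ups \<longleftrightarrow>
     (let d = d_star l; rr = r_star l invl; i = i_star invl; u = u_star ups; m = m_star l r mult;
          pair2 = pair_star Sup inf in
     \<comment> \<open>d, r, i, u, m are locale maps\<close>
     frame_hom d \<and> frame_hom rr \<and> frame_hom i \<and> frame_hom u \<and>
     frame_hom_into (OG2 l r) (Sup2 l r) (\<inter>) UNIV m \<and>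
     \<comment> \<open>G_2 is the pullback of r and d\<close>
     frame_hom_into (OG2 l r) (Sup2 l r) (\<inter>) UNIV (pi1_star l r) \<and>
     frame_hom_into (OG2 l r) (Sup2 l r) (\<inter>) UNIV (pi2_star l r) \<and>
     pi1_star l r \<circ> rr = pi2_star l r \<circ> d \<and>
     \<comment> \<open>involution: i \<circ> i = id, d \<circ> i = r, r \<circ> i = d\<close>
     i \<circ> i = id \<and> i \<circ> d = rr \<and> i \<circ> rr = d \<and>
     \<comment> \<open>d \<circ> u = id, r \<circ> u = id\<close>
     u \<circ> d = id \<and> u \<circ> rr = id \<and>
     \<comment> \<open>d \<circ> m = d \<circ> pi_1, r \<circ> m = r \<circ> pi_2\<close>
     m \<circ> d = pi1_star l r \<circ> d \<and> m \<circ> rr = pi2_star l r \<circ> rr \<and>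
     \<comment> \<open>associativity: m \<circ> (m \<times> id) = m \<circ> (id \<times> m) : G_3 -> G_1\<close>
     m_x_id_star l r mult \<circ> m = id_x_m_star l r mult \<circ> m \<and>
     \<comment> \<open>unit laws: m \<circ> \<langle>u \<circ> d, id\<rangle> = id = m \<circ> \<langle>id, u \<circ> r\<rangle>\<close>
     pair2 (d \<circ> u) id \<circ> m = id \<and> pair2 id (rr \<circ> u) \<circ> m = id \<and>
     \<comment> \<open>inverse laws: m \<circ> \<langle>id, i\<rangle> = u \<circ> d, m \<circ> \<langle>i, id\<rangle> = u \<circ> r\<close>
     pair2 id i \<circ> m = d \<circ> u \<and> pair2 i id \<circ> m = rr \<circ> u)"

definition assoc_graph_is_open_localic_groupoid ::
  "('a::frame \<Rightarrow> 'q::frame \<Rightarrow> 'q) \<Rightarrow> ('q \<Rightarrow> 'a \<Rightarrow> 'q) \<Rightarrow> ('q \<Rightarrow> 'q \<Rightarrow> 'q) \<Rightarrow> ('q \<Rightarrow> 'q) \<Rightarrow> ('q \<Rightarrow> 'a) \<Rightarrow> bool" where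
  "assoc_graph_is_open_localic_groupoid l r mult invl ups \<longleftrightarrow>
     assoc_graph_is_localic_groupoid l r mult invl ups \<and> open_map (d_star l)"

end

theory Submission
  imports Defs
begin


lemma supmono:
  fixes g :: "'a::complete_lattice \<Rightarrow> 'b::complete_lattice"
  assumes "\<And>X. g (Sup X) = (SUP x\<in>X. g x)" "x \<le> y"
  shows "g x \<le> g y"
proof -
  have "Sup {x,y} = y" using assms(2) by (simp add: le_iff_sup)
  hence "g y = sup (g x) (g y)" using assms(1)[of "{x,y}"] by simp
  thus ?thesis by (metis sup.cobounded1)
qed

lemma c2_down:
  assumes "tensA_closed l r S" "(x,y)\<in>S" "x'\<le>x" "y'\<le>y" shows "(x',y')\<in>S"
proof -
  have h: "\<forall>x y x' y'. (x,y) \<in> S \<longrightarrow> x' \<le> x \<longrightarrow> y' \<le> y \<longrightarrow> (x',y') \<in> S"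
    using assms(1) unfolding tensA_closed_def by (elim conjE)
  show ?thesis using h assms(2-4) by blast
qed
lemma c2_join1:
  assumes "tensA_closed l r S" "\<And>x. x\<in>X \<Longrightarrow> (x,y)\<in>S" shows "(Sup X, y) \<in> S"
proof -
  have h: "\<forall>X y. (\<forall>x\<in>X. (x,y) \<in> S) \<longrightarrow> (Sup X, y) \<in> S"
    using assms(1) unfolding tensA_closed_def by (elim conjE)
  show ?thesis using h assms(2) by blast
qed
lemma c2_join2:
  assumes "tensA_closed l r S" "\<And>y. y\<in>Y \<Longrightarrow> (x,y)\<in>S" shows "(x, Sup Y) \<in> S"
proof -
  have h: "\<forall>x Y. (\<forall>y\<in>Y. (x,y) \<in> S) \<longrightarrow> (x, Sup Y) \<in> S"
    using assms(1) unfolding tensA_closed_def by (elim conjE)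
  show ?thesis using h assms(2) by blast
qed
lemma c2_rel:
  assumes "tensA_closed l r S" shows "(x, l a y)\<in>S \<longleftrightarrow> (r x a, y)\<in>S"
proof -
  have h: "\<forall>x a y. (x, l a y) \<in> S \<longleftrightarrow> (r x a, y) \<in> S"
    using assms(1) unfolding tensA_closed_def by (elim conjE)
  show ?thesis using h by blast
qed
lemma c3_down:
  assumes "tens3_closed l r S" "(x,y,z)\<in>S" "x'\<le>x" "y'\<le>y" "z'\<le>z" shows "(x',y',z')\<in>S"
proof -
  have h: "\<forall>x y z x' y' z'. (x,y,z) \<in> S \<longrightarrow> x' \<le> x \<longrightarrow> y' \<le> y \<longrightarrow> z' \<le> z \<longrightarrow> (x',y',z') \<in> S"
    using assms(1) unfolding tens3_closed_def by (elim conjE)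
  show ?thesis using h assms(2-5) by blast
qed
lemma c3_join1:
  assumes "tens3_closed l r S" "\<And>x. x\<in>X \<Longrightarrow> (x,y,z)\<in>S" shows "(Sup X, y, z) \<in> S"
proof -
  have h: "\<forall>X y z. (\<forall>x\<in>X. (x,y,z) \<in> S) \<longrightarrow> (Sup X, y, z) \<in> S"
    using assms(1) unfolding tens3_closed_def by (elim conjE)
  show ?thesis using h assms(2) by blast
qed
lemma c3_join2:
  assumes "tens3_closed l r S" "\<And>y. y\<in>Y \<Longrightarrow> (x,y,z)\<in>S" shows "(x, Sup Y, z) \<in> S"
proof -
  have h: "\<forall>x Y z. (\<forall>y\<in>Y. (x,y,z) \<in> S) \<longrightarrow> (x, Sup Y, z) \<in> S"
    using assms(1) unfolding tens3_closed_def by (elim conjE)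
  show ?thesis using h assms(2) by blast
qed
lemma c3_join3:
  assumes "tens3_closed l r S" "\<And>z. z\<in>Z \<Longrightarrow> (x,y,z)\<in>S" shows "(x, y, Sup Z) \<in> S"
proof -
  have h: "\<forall>x y Z. (\<forall>z\<in>Z. (x,y,z) \<in> S) \<longrightarrow> (x, y, Sup Z) \<in> S"
    using assms(1) unfolding tens3_closed_def by (elim conjE)
  show ?thesis using h assms(2) by blast
qed
lemma c3_rel1:
  assumes "tens3_closed l r S" shows "(x, l a y, z)\<in>S \<longleftrightarrow> (r x a, y, z)\<in>S"
proof -
  have h: "\<forall>x a y z. (x, l a y, z) \<in> S \<longleftrightarrow> (r x a, y, z) \<in> S"
    using assms(1) unfolding tens3_closed_def by (elim conjE)
  show ?thesis using h by blast
qed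
lemma c3_rel2:
  assumes "tens3_closed l r S" shows "(x, y, l a z)\<in>S \<longleftrightarrow> (x, r y a, z)\<in>S"
proof -
  have h: "\<forall>x y a z. (x, y, l a z) \<in> S \<longleftrightarrow> (x, r y a, z) \<in> S"
    using assms(1) unfolding tens3_closed_def by (elim conjE)
  show ?thesis using h by blast
qed

lemma Inter_closed2:
  assumes A: "\<And>S. S \<in> F \<Longrightarrow> tensA_closed l r S"
  shows "tensA_closed l r (\<Inter>F)"
  unfolding tensA_closed_def
proof (intro conjI allI impI)
  fix x y x' y' assume h: "(x, y) \<in> \<Inter> F" "x' \<le> x" "y' \<le> y"
  show "(x', y') \<in> \<Inter> F"
  proof (rule InterI)
    fix S assume S: "S \<in> F"
    show "(x',y') \<in> S" using c2_down[OF A[OF S] InterD[OF h(1) S] h(2,3)] .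
  qed
next
  fix X y assume h: "\<forall>x\<in>X. (x, y) \<in> \<Inter> F"
  show "(Sup X, y) \<in> \<Inter> F"
  proof (rule InterI)
    fix S assume S: "S \<in> F"
    show "(Sup X, y) \<in> S" by (rule c2_join1[OF A[OF S]]) (use h S in blast)
  qed
next
  fix x Y assume h: "\<forall>y\<in>Y. (x, y) \<in> \<Inter> F"
  show "(x, Sup Y) \<in> \<Inter> F"
  proof (rule InterI)
    fix S assume S: "S \<in> F"
    show "(x, Sup Y) \<in> S" by (rule c2_join2[OF A[OF S]]) (use h S in blast)
  qed
next
  fix x a y
  have "\<And>S. S \<in> F \<Longrightarrow> (x, l a y) \<in> S \<longleftrightarrow> (r x a, y) \<in> S" using c2_rel A by blast
  then show "(x, l a y) \<in> \<Inter> F \<longleftrightarrow> (r x a, y) \<in> \<Inter> F" by (simp add: Inter_iff)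
qed

lemma Sup2_closed: "tensA_closed l r (Sup2 l r SS)"
  proof -
  have "\<And>S. S \<in> {S \<in> OG2 l r. \<Union>SS \<subseteq> S} \<Longrightarrow> tensA_closed l r S"
    unfolding OG2_def by (drule CollectD, erule conjE, drule CollectD)
  then show ?thesis unfolding Sup2_def by (rule Inter_closed2)
qed

lemma Sup2_upper: "A \<in> SS \<Longrightarrow> A \<subseteq> Sup2 l r SS"
  unfolding Sup2_def by (rule Inter_greatest) blast

lemma Sup2_least: "tensA_closed l r T \<Longrightarrow> (\<And>A. A \<in> SS \<Longrightarrow> A \<subseteq> T) \<Longrightarrow> Sup2 l r SS \<subseteq> T"
  unfolding Sup2_def by (rule Inter_lower) (simp add: OG2_def Union_least)

lemma Inter_closed3:
  assumes A: "\<And>S. S \<in> F \<Longrightarrow> tens3_closed l r S"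
  shows "tens3_closed l r (\<Inter>F)"
  unfolding tens3_closed_def
proof (intro conjI allI impI)
  fix x y z x' y' z' assume h: "(x, y, z) \<in> \<Inter> F" "x' \<le> x" "y' \<le> y" "z' \<le> z"
  show "(x', y', z') \<in> \<Inter> F"
  proof (rule InterI)
    fix S assume S: "S \<in> F"
    show "(x',y',z') \<in> S" using c3_down[OF A[OF S] InterD[OF h(1) S] h(2,3,4)] .
  qed
next
  fix X y z assume h: "\<forall>x\<in>X. (x, y, z) \<in> \<Inter> F"
  show "(Sup X, y, z) \<in> \<Inter> F"
  proof (rule InterI)
    fix S assume S: "S \<in> F"
    show "(Sup X, y, z) \<in> S" by (rule c3_join1[OF A[OF S]]) (use h S in blast)
  qed
next
  fix x Y z assume h: "\<forall>y\<in>Y. (x, y, z) \<in> \<Inter> F"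
  show "(x, Sup Y, z) \<in> \<Inter> F"
  proof (rule InterI)
    fix S assume S: "S \<in> F"
    show "(x, Sup Y, z) \<in> S" by (rule c3_join2[OF A[OF S]]) (use h S in blast)
  qed
next
  fix x y Z assume h: "\<forall>z\<in>Z. (x, y, z) \<in> \<Inter> F"
  show "(x, y, Sup Z) \<in> \<Inter> F"
  proof (rule InterI)
    fix S assume S: "S \<in> F"
    show "(x, y, Sup Z) \<in> S" by (rule c3_join3[OF A[OF S]]) (use h S in blast)
  qed
next
  fix x a y z
  have "\<And>S. S \<in> F \<Longrightarrow> (x, l a y, z) \<in> S \<longleftrightarrow> (r x a, y, z) \<in> S" using c3_rel1 A by blast
  then show "(x, l a y, z) \<in> \<Inter> F \<longleftrightarrow> (r x a, y, z) \<in> \<Inter> F" by (simp add: Inter_iff)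
next
  fix x y a z
  have "\<And>S. S \<in> F \<Longrightarrow> (x, y, l a z) \<in> S \<longleftrightarrow> (x, r y a, z) \<in> S" using c3_rel2 A by blast
  then show "(x, y, l a z) \<in> \<Inter> F \<longleftrightarrow> (x, r y a, z) \<in> \<Inter> F" by (simp add: Inter_iff)
qed

lemma Sup3_closed: "tens3_closed l r (Sup3 l r SS)"
  proof -
  have "\<And>S. S \<in> {S \<in> OG3 l r. \<Union>SS \<subseteq> S} \<Longrightarrow> tens3_closed l r S"
    unfolding OG3_def by (drule CollectD, erule conjE, drule CollectD)
  then show ?thesis unfolding Sup3_def by (rule Inter_closed3)
qed

lemma Sup3_upper: "A \<in> SS \<Longrightarrow> A \<subseteq> Sup3 l r SS"
  unfolding Sup3_def by (rule Inter_greatest) blast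

lemma Sup3_least: "tens3_closed l r T \<Longrightarrow> (\<And>A. A \<in> SS \<Longrightarrow> A \<subseteq> T) \<Longrightarrow> Sup3 l r SS \<subseteq> T"
  unfolding Sup3_def by (rule Inter_lower) (simp add: OG3_def Union_least)

lemma closed2I:
  fixes f :: "'q::complete_lattice \<Rightarrow> 'q \<Rightarrow> 'c::complete_lattice"
  assumes s1: "\<And>X y. f (Sup X) y = (SUP x\<in>X. f x y)"
    and s2: "\<And>x Y. f x (Sup Y) = (SUP y\<in>Y. f x y)"
    and rel: "\<And>x a y. f x (l a y) = f (r x a) y"
  shows "tensA_closed l r {(x,y). f x y \<le> c}"
  unfolding tensA_closed_def
proof (intro conjI allI impI)
  fix x y x' y' assume "(x,y) \<in> {(x,y). f x y \<le> c}" "x' \<le> x" "y' \<le> y"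
  moreover have "f x' y' \<le> f x y'" using supmono[of "\<lambda>x. f x y'"] s1 \<open>x' \<le> x\<close> by blast
  moreover have "f x y' \<le> f x y" using supmono[of "\<lambda>y. f x y"] s2 \<open>y' \<le> y\<close> by blast
  ultimately show "(x',y') \<in> {(x,y). f x y \<le> c}" by auto
next
  fix X y assume "\<forall>x\<in>X. (x, y) \<in> {(x, y). f x y \<le> c}"
  then show "(Sup X, y) \<in> {(x, y). f x y \<le> c}" by (simp add: s1 SUP_least)
next
  fix x Y assume "\<forall>y\<in>Y. (x, y) \<in> {(x, y). f x y \<le> c}"
  then show "(x, Sup Y) \<in> {(x, y). f x y \<le> c}" by (simp add: s2 SUP_least)
qed (simp add: rel)

lemma closed3I:
  fixes f :: "'q::complete_lattice \<Rightarrow> 'q \<Rightarrow> 'q \<Rightarrow> 'c::complete_lattice"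
  assumes s1: "\<And>X y z. f (Sup X) y z = (SUP x\<in>X. f x y z)"
    and s2: "\<And>x Y z. f x (Sup Y) z = (SUP y\<in>Y. f x y z)"
    and s3: "\<And>x y Z. f x y (Sup Z) = (SUP z\<in>Z. f x y z)"
    and rel1: "\<And>x a y z. f x (l a y) z = f (r x a) y z"
    and rel2: "\<And>x y a z. f x y (l a z) = f x (r y a) z"
  shows "tens3_closed l r {(x,y,z). f x y z \<le> c}"
  unfolding tens3_closed_def
proof (intro conjI allI impI)
  fix x y z x' y' z' assume "(x,y,z) \<in> {(x,y,z). f x y z \<le> c}" "x' \<le> x" "y' \<le> y" "z' \<le> z"
  moreover have "f x' y' z' \<le> f x y' z'" using supmono[of "\<lambda>x. f x y' z'"] s1 \<open>x' \<le> x\<close> by blast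
  moreover have "f x y' z' \<le> f x y z'" using supmono[of "\<lambda>y. f x y z'"] s2 \<open>y' \<le> y\<close> by blast
  moreover have "f x y z' \<le> f x y z" using supmono[of "\<lambda>z. f x y z"] s3 \<open>z' \<le> z\<close> by blast
  ultimately show "(x',y',z') \<in> {(x,y,z). f x y z \<le> c}" by auto
next
  fix X y z assume "\<forall>x\<in>X. (x, y, z) \<in> {(x, y, z). f x y z \<le> c}"
  then show "(Sup X, y, z) \<in> {(x, y, z). f x y z \<le> c}" by (simp add: s1 SUP_least)
next
  fix x Y z assume "\<forall>y\<in>Y. (x, y, z) \<in> {(x, y, z). f x y z \<le> c}"
  then show "(x, Sup Y, z) \<in> {(x, y, z). f x y z \<le> c}" by (simp add: s2 SUP_least)
next
  fix x y Z assume "\<forall>z\<in>Z. (x, y, z) \<in> {(x, y, z). f x y z \<le> c}"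
  then show "(x, y, Sup Z) \<in> {(x, y, z). f x y z \<le> c}" by (simp add: s3 SUP_least)
qed (simp_all add: rel1 rel2)


lemma tens_closed: "tensA_closed l r (tens l r x y)"
  unfolding tens_def by (rule Sup2_closed)
lemma tens_gen: "(x,y) \<in> tens l r x y"
  unfolding tens_def using Sup2_upper[of "{(x,y)}" "{{(x,y)}}" l r] by blast
lemma tens_least: "tensA_closed l r T \<Longrightarrow> (x,y) \<in> T \<Longrightarrow> tens l r x y \<subseteq> T"
  unfolding tens_def by (rule Sup2_least) auto
lemma tens3_closed: "tens3_closed l r (tens3 l r x y z)"
  unfolding tens3_def by (rule Sup3_closed)
lemma tens3_gen: "(x,y,z) \<in> tens3 l r x y z"
  unfolding tens3_def using Sup3_upper[of "{(x,y,z)}" "{{(x,y,z)}}" l r] by blast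
lemma tens3_least: "tens3_closed l r T \<Longrightarrow> (x,y,z) \<in> T \<Longrightarrow> tens3 l r x y z \<subseteq> T"
  unfolding tens3_def by (rule Sup3_least) auto
lemma Sup2_in: "(x,y) \<in> A \<Longrightarrow> A \<in> SS \<Longrightarrow> (x,y) \<in> Sup2 l r SS"
  using Sup2_upper by blast
lemma Sup3_in: "(x,y,z) \<in> A \<Longrightarrow> A \<in> SS \<Longrightarrow> (x,y,z) \<in> Sup3 l r SS"
  using Sup3_upper by blast

lemma tens_rel: "tens l r (r x a) y = tens l r x (l a y)"
  unfolding tens_def Sup2_def OG2_def
proof (rule arg_cong[where f=Inter], rule Collect_cong)
  fix S
  show "(S \<in> {S. tensA_closed l r S} \<and> \<Union>{{(r x a, y)}} \<subseteq> S) = (S \<in> {S. tensA_closed l r S} \<and> \<Union>{{(x, l a y)}} \<subseteq> S)"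
    using c2_rel[of l r S x a y] by auto
qed

locale gq =
  fixes l :: "'a::frame \<Rightarrow> 'q::frame \<Rightarrow> 'q"
    and r :: "'q \<Rightarrow> 'a \<Rightarrow> 'q"
    and mult :: "'q \<Rightarrow> 'q \<Rightarrow> 'q"
    and invl :: "'q \<Rightarrow> 'q"
    and ups :: "'q \<Rightarrow> 'a"
    and s :: "'q \<Rightarrow> 'a"
  assumes l_Sup1: "l (Sup S) m = (SUP a\<in>S. l a m)"
    and l_Sup2: "l a (Sup M) = (SUP m\<in>M. l a m)"
    and r_Sup1: "r (Sup M) a = (SUP m\<in>M. r m a)"
    and r_Sup2: "r m (Sup S) = (SUP a\<in>S. r m a)"
    and l_top: "l top m = m"
    and l_inf: "l (inf a b) m = l a (l b m)"
    and r_top: "r m top = m"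
    and r_inf: "\<And>a b m. r m (inf a b) = r (r m a) b"
    and lr: "r (l a m) b = l a (r m b)"
    and assoc: "mult (mult x y) z = mult x (mult y z)"
    and mult_Sup1: "mult (Sup X) y = (SUP x\<in>X. mult x y)"
    and mult_Sup2: "mult x (Sup Y) = (SUP y\<in>Y. mult x y)"
    and mult_l: "mult (l a x) y = l a (mult x y)"
    and mult_r: "mult (r x a) y = mult x (l a y)"
    and r_mult: "r (mult x y) a = mult x (r y a)"
    and invl_Sup: "invl (Sup X) = (SUP x\<in>X. invl x)"
    and invl_invl: "invl (invl x) = x"
    and invl_mult: "invl (mult x y) = mult (invl y) (invl x)"
    and invl_lr: "invl (l a (r x b)) = l b (r (invl x) a)"
    and s_Sup: "s (Sup X) = (SUP x\<in>X. s x)"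
    and s_top: "s top = top"
    and s_le: "l (s x) y \<le> mult (mult x (invl x)) y"
    and s_x: "l (s x) x = x"
    and s_equiv: "s (l a x) = inf a (s x)"
    and inf_l: "inf (l a x) y = l a (inf x y)"
    and inf_r: "inf (r x a) y = r (inf x y) a"
    and ups_hom: "frame_hom ups"
    and ups_l: "ups (l a top) = a"
    and ups_r: "ups (r top a) = a"
    and multiplicative: "multiplicative l r mult"
    and unit_laws: "unit_laws l mult ups"
    and inverse_law: "inverse_law l mult invl ups"
begin

lemma l_mono1: "a \<le> b \<Longrightarrow> l a x \<le> l b x"
  using supmono[of "\<lambda>a. l a x"] l_Sup1 by blast
lemma l_mono2: "x \<le> y \<Longrightarrow> l a x \<le> l a y"
  using supmono[of "\<lambda>x. l a x"] l_Sup2 by blast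
lemma r_mono1: "x \<le> y \<Longrightarrow> r x a \<le> r y a"
  using supmono[of "\<lambda>x. r x a"] r_Sup1 by blast
lemma r_mono2: "a \<le> b \<Longrightarrow> r x a \<le> r x b"
  using supmono[of "\<lambda>a. r x a"] r_Sup2 by blast
lemma mult_mono1: "x \<le> y \<Longrightarrow> mult x z \<le> mult y z"
  using supmono[of "\<lambda>x. mult x z"] mult_Sup1 by blast
lemma mult_mono2: "x \<le> y \<Longrightarrow> mult z x \<le> mult z y"
  using supmono[of "\<lambda>x. mult z x"] mult_Sup2 by blast
lemma mult_mono: "x \<le> x' \<Longrightarrow> y \<le> y' \<Longrightarrow> mult x y \<le> mult x' y'"
  by (meson mult_mono1 mult_mono2 order_trans)
lemma s_mono: "x \<le> y \<Longrightarrow> s x \<le> s y"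
  using supmono[of "s"] s_Sup by blast
lemma invl_mono: "x \<le> y \<Longrightarrow> invl x \<le> invl y"
  using supmono[of "invl"] invl_Sup by blast
lemma invl_le_iff: "invl x \<le> invl y \<longleftrightarrow> x \<le> y"
  by (metis invl_mono invl_invl)
lemma invl_inj: "invl x = invl y \<longleftrightarrow> x = y"
  by (metis invl_invl)
lemma l_le: "l a x \<le> x"
  using l_mono1[of a top x] l_top by simp
lemma r_le: "r x a \<le> x"
  using r_mono2[of a top x] r_top by simp
lemma l_eq_inf: "l a x = inf (l a top) x"
  using inf_l[of a top x] by simp
lemma r_eq_inf: "r x a = inf (r top a) x"
  using inf_r[of top a x] by simp
lemma l_comm: "l a (l b x) = l b (l a x)"
  by (metis l_inf inf_commute)
lemma invl_top: "invl top = top"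
  by (metis invl_invl invl_mono top.extremum top.extremum_unique)
lemma invl_inf: "invl (inf x y) = inf (invl x) (invl y)"
proof (rule antisym)
  show "invl (inf x y) \<le> inf (invl x) (invl y)" by (simp add: invl_mono)
  have "invl (inf (invl x) (invl y)) \<le> inf x y"
    by (metis inf_le1 inf_le2 invl_invl invl_mono le_inf_iff)
  then show "inf (invl x) (invl y) \<le> invl (inf x y)"
    by (metis invl_invl invl_mono)
qed
lemma invl_l: "invl (l a x) = r (invl x) a"
  using invl_lr[of a x top] by (simp add: r_top l_top)
lemma invl_r: "invl (r x b) = l b (invl x)"
  using invl_lr[of top x b] by (simp add: r_top l_top)
lemma s_adj: "s x \<le> a \<longleftrightarrow> x \<le> l a top"
proof
  assume "s x \<le> a"
  then have "l (s x) x \<le> l a top" by (meson l_mono1 l_mono2 order_trans top_greatest)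
  then show "x \<le> l a top" by (simp add: s_x)
next
  assume "x \<le> l a top"
  then have "s x \<le> s (l a top)" by (rule s_mono)
  then show "s x \<le> a" by (simp add: s_equiv s_top)
qed
lemma x_rs: "r x (s (invl x)) = x"
  by (metis invl_l invl_invl s_x)
lemma mult_s: "mult (r z (s y)) y = mult z y"
  by (simp add: mult_r s_x)
lemma mult_sinv: "mult z (l (s (invl z)) y) = mult z y"
  by (metis mult_r x_rs)
lemma s_mult_le: "s (mult z y) \<le> s z"
proof -
  have "mult z y = l (s z) (mult z y)" by (metis mult_l s_x)
  also have "\<dots> \<le> l (s z) top" by (simp add: l_mono2)
  finally show ?thesis by (simp add: s_adj)
qed
lemma s_stable: "s (mult x y) = s (r x (s y))"
proof (rule antisym)
  show "s (mult x y) \<le> s (r x (s y))" by (metis mult_s s_mult_le)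
  have "invl (l (s y) (invl x)) \<le> invl (mult (mult y (invl y)) (invl x))"
    using s_le invl_mono by blast
  then have "r x (s y) \<le> mult (mult x y) (invl y)"
    by (simp add: invl_l invl_mult invl_invl assoc)
  then have "s (r x (s y)) \<le> s (mult (mult x y) (invl y))" by (rule s_mono)
  also have "\<dots> \<le> s (mult x y)" by (rule s_mult_le)
  finally show "s (r x (s y)) \<le> s (mult x y)" .
qed
lemma invl_s_l: "s (invl (r x a)) = inf a (s (invl x))"
  by (simp add: invl_r s_equiv)
lemma ups_invl: "ups (invl a) = ups a"
proof -
  have "l (ups (invl a)) top = Sup {inf x y | x y. mult x (invl y) \<le> invl a}"
    using inverse_law unfolding inverse_law_def by blast
  also have "{inf x y | x y. mult x (invl y) \<le> invl a} = {inf x y | x y. mult x (invl y) \<le> a}"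
  proof -
    have e: "mult x (invl y) \<le> invl a \<longleftrightarrow> mult y (invl x) \<le> a" for x y
      by (metis invl_le_iff invl_mult invl_invl)
    show ?thesis unfolding e by (metis inf_commute)
  qed
  also have "Sup \<dots> = l (ups a) top"
    using inverse_law unfolding inverse_law_def by metis
  finally show ?thesis by (metis ups_l)
qed


definition P1 where "P1 x = {(x',y'). r x' (s y') \<le> x}"
definition P2 where "P2 y = {(x',y'). l (s (invl x')) y' \<le> y}"
definition Rm where "Rm c = {(x,y). mult x y \<le> c}"

lemma P1_closed: "tensA_closed l r (P1 x)"
  unfolding P1_def
  apply (rule closed2I[where f="\<lambda>x' y'. r x' (s y')"])
    apply (simp add: r_Sup1)
   apply (simp add: s_Sup r_Sup2 image_image)
  apply (simp add: s_equiv r_inf)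
  done

lemma P2_closed: "tensA_closed l r (P2 y)"
  unfolding P2_def
  apply (rule closed2I[where f="\<lambda>x' y'. l (s (invl x')) y'"])
    apply (simp add: invl_Sup s_Sup l_Sup1 image_image)
   apply (simp add: l_Sup2)
  apply (simp add: invl_r s_equiv l_inf)
  apply (metis l_comm)
  done

lemma Rm_closed: "tensA_closed l r (Rm c)"
  unfolding Rm_def
  apply (rule closed2I[where f="mult"])
    apply (simp add: mult_Sup1)
   apply (simp add: mult_Sup2)
  apply (simp add: mult_r)
  done

lemma P1_mono: assumes "x \<le> y" shows "P1 x \<subseteq> P1 y"
  unfolding P1_def by (auto intro: order.trans[OF _ assms])
lemma P2_mono: assumes "x \<le> y" shows "P2 x \<subseteq> P2 y"
  unfolding P2_def by (auto intro: order.trans[OF _ assms])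

lemma tens_P1: "tens l r x top = P1 x"
proof
  show "tens l r x top \<subseteq> P1 x"
    by (rule tens_least[OF P1_closed]) (simp add: P1_def r_le)
  show "P1 x \<subseteq> tens l r x top"
  proof (rule subsetI)
    fix p assume "p \<in> P1 x"
    then obtain x' y' where p: "p = (x',y')" "r x' (s y') \<le> x" by (auto simp: P1_def)
    let ?S = "tens l r x top"
    have cl: "tensA_closed l r ?S" by (rule tens_closed)
    have "(r x' (s y'), y') \<in> ?S" using c2_down[OF cl tens_gen p(2) top_greatest] .
    then have "(x', l (s y') y') \<in> ?S" by (rule c2_rel[OF cl, THEN iffD2])
    then show "p \<in> ?S" using p by (simp add: s_x)
  qed
qed

lemma tens_P2: "tens l r top y = P2 y"
proof
  show "tens l r top y \<subseteq> P2 y"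
    by (rule tens_least[OF P2_closed]) (simp add: P2_def l_le)
  show "P2 y \<subseteq> tens l r top y"
  proof (rule subsetI)
    fix p assume "p \<in> P2 y"
    then obtain x' y' where p: "p = (x',y')" "l (s (invl x')) y' \<le> y" by (auto simp: P2_def)
    let ?S = "tens l r top y"
    have cl: "tensA_closed l r ?S" by (rule tens_closed)
    have "(x', l (s (invl x')) y') \<in> ?S" using c2_down[OF cl tens_gen top_greatest p(2)] .
    then have "(r x' (s (invl x')), y') \<in> ?S" by (rule c2_rel[OF cl, THEN iffD1])
    then show "p \<in> ?S" using p by (simp add: x_rs)
  qed
qed

lemma P1_Sup: "P1 (Sup X) = Sup2 l r (P1 ` X)"
proof
  show "Sup2 l r (P1 ` X) \<subseteq> P1 (Sup X)"
    by (rule Sup2_least[OF P1_closed]) (metis imageE P1_mono Sup_upper)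
  show "P1 (Sup X) \<subseteq> Sup2 l r (P1 ` X)"
  proof (rule subsetI)
    fix p assume "p \<in> P1 (Sup X)"
    then obtain x' y' where p: "p = (x',y')" and le: "r x' (s y') \<le> Sup X" by (auto simp: P1_def)
    define z where "z = r x' (s y')"
    let ?S = "Sup2 l r (P1 ` X)"
    have cl: "tensA_closed l r ?S" by (rule Sup2_closed)
    have "(Sup ((\<lambda>x. inf z x) ` X), y') \<in> ?S"
    proof (rule c2_join1[OF cl])
      fix w assume "w \<in> (\<lambda>x. inf z x) ` X"
      then obtain x where x: "x \<in> X" "w = inf z x" by auto
      have "r w (s y') \<le> x" using x(2) by (metis inf.bounded_iff r_le order_trans)
      then have "(w, y') \<in> P1 x" by (simp add: P1_def)
      then show "(w,y') \<in> ?S" using x(1) by (intro Sup2_in) auto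
    qed
    moreover have "Sup ((\<lambda>x. inf z x) ` X) = z"
      using inf_Sup_frame[of z X] le unfolding z_def by (simp add: inf_absorb1)
    ultimately have "(z, y') \<in> ?S" by simp
    then have "(x', l (s y') y') \<in> ?S" unfolding z_def by (rule c2_rel[OF cl, THEN iffD2])
    then show "p \<in> ?S" using p by (simp add: s_x)
  qed
qed

lemma P2_Sup: "P2 (Sup Y) = Sup2 l r (P2 ` Y)"
proof
  show "Sup2 l r (P2 ` Y) \<subseteq> P2 (Sup Y)"
    by (rule Sup2_least[OF P2_closed]) (metis imageE P2_mono Sup_upper)
  show "P2 (Sup Y) \<subseteq> Sup2 l r (P2 ` Y)"
  proof (rule subsetI)
    fix p assume "p \<in> P2 (Sup Y)"
    then obtain x' y' where p: "p = (x',y')" and le: "l (s (invl x')) y' \<le> Sup Y" by (auto simp: P2_def)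
    define z where "z = l (s (invl x')) y'"
    let ?S = "Sup2 l r (P2 ` Y)"
    have cl: "tensA_closed l r ?S" by (rule Sup2_closed)
    have "(x', Sup ((\<lambda>y. inf z y) ` Y)) \<in> ?S"
    proof (rule c2_join2[OF cl])
      fix w assume "w \<in> (\<lambda>y. inf z y) ` Y"
      then obtain y where y: "y \<in> Y" "w = inf z y" by auto
      have "l (s (invl x')) w \<le> y" using y(2) by (metis inf.bounded_iff l_le order_trans)
      then have "(x', w) \<in> P2 y" by (simp add: P2_def)
      then show "(x',w) \<in> ?S" using y(1) by (intro Sup2_in) auto
    qed
    moreover have "Sup ((\<lambda>y. inf z y) ` Y) = z"
      using inf_Sup_frame[of z Y] le unfolding z_def by (simp add: inf_absorb1)
    ultimately have "(x', z) \<in> ?S" by simp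
    then have "(r x' (s (invl x')), y') \<in> ?S" unfolding z_def by (rule c2_rel[OF cl, THEN iffD1])
    then show "p \<in> ?S" using p by (simp add: x_rs)
  qed
qed

lemma m_star_Rm: "m_star l r mult c = Rm c"
proof
  show "m_star l r mult c \<subseteq> Rm c"
    unfolding m_star_def
  proof (rule Sup2_least[OF Rm_closed])
    fix A assume "A \<in> {tens l r x y |x y. mult x y \<le> c}"
    then obtain x y where "A = tens l r x y" "mult x y \<le> c" by blast
    then show "A \<subseteq> Rm c" using tens_least[OF Rm_closed, of x y c] by (simp add: Rm_def)
  qed
  show "Rm c \<subseteq> m_star l r mult c"
  proof (rule subsetI)
    fix p assume "p \<in> Rm c"
    then obtain x y where p: "p = (x,y)" "mult x y \<le> c" by (auto simp: Rm_def)
    show "p \<in> m_star l r mult c" unfolding m_star_def p(1)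
      by (rule Sup2_in[OF tens_gen]) (use p(2) in blast)
  qed
qed

lemma muA_radj_Rm: "muA_radj l r mult c = Rm c"
proof
  show "muA_radj l r mult c \<subseteq> Rm c"
    unfolding muA_radj_def
  proof (rule Sup2_least[OF Rm_closed])
    fix S assume "S \<in> {S \<in> OG2 l r. muA mult S \<le> c}"
    then have le: "muA mult S \<le> c" by simp
    show "S \<subseteq> Rm c"
    proof
      fix p assume "p \<in> S"
      then obtain x y where p: "p = (x,y)" "(x,y) \<in> S" by (cases p) auto
      have "mult x y \<le> muA mult S" unfolding muA_def using p(2) by (intro Sup_upper) blast
      then show "p \<in> Rm c" using le p(1) by (simp add: Rm_def)
    qed
  qed
  have "muA mult (Rm c) \<le> c" unfolding muA_def Rm_def by (auto intro!: Sup_least)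
  then have "Rm c \<in> {S \<in> OG2 l r. muA mult S \<le> c}" using Rm_closed by (simp add: OG2_def)
  then show "Rm c \<subseteq> muA_radj l r mult c" unfolding muA_radj_def by (rule Sup2_upper)
qed

lemma Rm_Sup: "Rm (Sup C) = Sup2 l r (Rm ` C)"
  using multiplicative unfolding multiplicative_def muA_radj_Rm
  by (metis (no_types) image_cong muA_radj_Rm)


definition T3 where "T3 c = {(u,v,w). mult (mult u v) w \<le> c}"
definition Q1 where "Q1 u = {(u',v',w'). r u' (s (r v' (s w'))) \<le> u}"
definition Q2 where "Q2 v = {(u',v',w'). l (s (invl u')) (r v' (s w')) \<le> v}"
definition Q3 where "Q3 w = {(u',v',w'). l (s (invl (mult u' v'))) w' \<le> w}"
definition B3 where "B3 x = {(u',v',w'). r (mult u' v') (s w') \<le> x}"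
definition Q1' where "Q1' u = {(u',v',w'). r u' (s (mult v' w')) \<le> u}"
definition Q3' where "Q3' w = {(u',v',w'). l (s (invl (l (s (invl u')) v'))) w' \<le> w}"
definition B3' where "B3' y = {(u',v',w'). l (s (invl u')) (mult v' w') \<le> y}"

lemma T3_closed: "tens3_closed l r (T3 c)"
  unfolding T3_def
  apply (rule closed3I[where f="\<lambda>u v w. mult (mult u v) w"])
      apply (simp add: mult_Sup1 image_image)
     apply (simp add: mult_Sup1 mult_Sup2 image_image)
    apply (simp add: mult_Sup2)
   apply (simp add: assoc mult_r mult_l)
  apply (simp add: assoc mult_r mult_l)
  done

lemma Q1_closed: "tens3_closed l r (Q1 c)"
  unfolding Q1_def
  apply (rule closed3I[where f="\<lambda>u' v' w'. r u' (s (r v' (s w')))"])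
      apply (simp add: r_Sup1)
     apply (simp add: r_Sup1 s_Sup r_Sup2 image_image)
    apply (simp add: r_Sup2 s_Sup image_image)
   apply (simp add: lr s_equiv r_inf)
  apply (simp add: s_equiv r_inf)
  done

lemma Q2_closed: "tens3_closed l r (Q2 c)"
  unfolding Q2_def
  apply (rule closed3I[where f="\<lambda>u' v' w'. l (s (invl u')) (r v' (s w'))"])
      apply (simp add: invl_Sup s_Sup l_Sup1 image_image)
     apply (simp add: r_Sup1 l_Sup2 image_image)
    apply (simp add: s_Sup r_Sup2 l_Sup2 image_image)
   apply (simp add: lr invl_r s_equiv l_inf)
   apply (metis l_comm)
  apply (simp add: s_equiv r_inf)
  done

lemma Q3_closed: "tens3_closed l r (Q3 c)"
  unfolding Q3_def
  apply (rule closed3I[where f="\<lambda>u' v' w'. l (s (invl (mult u' v'))) w'"])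
      apply (simp add: mult_Sup1 invl_Sup s_Sup l_Sup1 image_image)
     apply (simp add: mult_Sup2 invl_Sup s_Sup l_Sup1 image_image)
    apply (simp add: l_Sup2)
   apply (simp add: mult_r)
  apply (simp add: r_mult[symmetric] invl_r s_equiv l_inf)
  apply (metis l_comm)
  done

lemma B3_closed: "tens3_closed l r (B3 c)"
  unfolding B3_def
  apply (rule closed3I[where f="\<lambda>u' v' w'. r (mult u' v') (s w')"])
      apply (simp add: mult_Sup1 r_Sup1 image_image)
     apply (simp add: mult_Sup2 r_Sup1 image_image)
    apply (simp add: s_Sup r_Sup2 image_image)
   apply (simp add: mult_r)
  apply (simp add: s_equiv r_inf r_mult)
  done

lemma Q1'_closed: "tens3_closed l r (Q1' c)"
  unfolding Q1'_def
  apply (rule closed3I[where f="\<lambda>u' v' w'. r u' (s (mult v' w'))"])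
      apply (simp add: r_Sup1)
     apply (simp add: mult_Sup1 s_Sup r_Sup2 image_image)
    apply (simp add: mult_Sup2 s_Sup r_Sup2 image_image)
   apply (simp add: mult_l s_equiv r_inf)
  apply (simp add: mult_r)
  done

lemma Q3'_closed: "tens3_closed l r (Q3' c)"
  unfolding Q3'_def
  apply (rule closed3I[where f="\<lambda>u' v' w'. l (s (invl (l (s (invl u')) v'))) w'"])
      apply (simp add: invl_Sup s_Sup l_Sup1 image_image)
     apply (simp add: l_Sup2 invl_Sup s_Sup l_Sup1 image_image)
    apply (simp add: l_Sup2)
   apply (simp add: invl_r s_equiv l_inf)
   apply (metis l_comm)
  apply (metis lr invl_r s_equiv l_inf l_comm)
  done

lemma B3'_closed: "tens3_closed l r (B3' c)"
  unfolding B3'_def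
  apply (rule closed3I[where f="\<lambda>u' v' w'. l (s (invl u')) (mult v' w')"])
      apply (simp add: invl_Sup s_Sup l_Sup1 image_image)
     apply (simp add: mult_Sup1 l_Sup2 image_image)
    apply (simp add: mult_Sup2 l_Sup2 image_image)
   apply (simp add: mult_l invl_r s_equiv l_inf)
   apply (metis l_comm)
  apply (simp add: mult_r)
  done


lemma p1_Q1: "tens3 l r u top top \<subseteq> Q1 u"
  by (rule tens3_least[OF Q1_closed]) (simp add: Q1_def r_le)
lemma p2_Q2: "tens3 l r top v top \<subseteq> Q2 v"
  by (rule tens3_least[OF Q2_closed]) (simp add: Q2_def invl_top s_top l_top r_top)
lemma p3_Q3: "tens3 l r top top w \<subseteq> Q3 w"
  by (rule tens3_least[OF Q3_closed]) (simp add: Q3_def l_le)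
lemma p1_Q1': "tens3 l r u top top \<subseteq> Q1' u"
  by (rule tens3_least[OF Q1'_closed]) (simp add: Q1'_def r_le)
lemma p3_Q3': "tens3 l r top top w \<subseteq> Q3' w"
  by (rule tens3_least[OF Q3'_closed]) (simp add: Q3'_def l_le)

lemma B3_mono: assumes "x \<le> y" shows "B3 x \<subseteq> B3 y"
  unfolding B3_def by (auto intro: order.trans[OF _ assms])
lemma B3'_mono: assumes "x \<le> y" shows "B3' x \<subseteq> B3' y"
  unfolding B3'_def by (auto intro: order.trans[OF _ assms])
lemma T3_mono: assumes "x \<le> y" shows "T3 x \<subseteq> T3 y"
  unfolding T3_def by (auto intro: order.trans[OF _ assms])

lemma Q12_B3:
  assumes "(u',v',w') \<in> Q1 u" "(u',v',w') \<in> Q2 v"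
  shows "(u',v',w') \<in> B3 (mult u v)"
proof -
  have h1: "r u' (s (r v' (s w'))) \<le> u" and h2: "l (s (invl u')) (r v' (s w')) \<le> v"
    using assms by (auto simp: Q1_def Q2_def)
  define v1 where "v1 = l (s (invl u')) (r v' (s w'))"
  have "r (mult u' v') (s w') = mult u' (r v' (s w'))" by (rule r_mult)
  also have "\<dots> = mult u' v1" unfolding v1_def by (rule mult_sinv[symmetric])
  also have "\<dots> = mult (r u' (s v1)) v1" by (rule mult_s[symmetric])
  also have "\<dots> \<le> mult u v"
  proof (rule mult_mono)
    have "s v1 \<le> s (r v' (s w'))" unfolding v1_def by (rule s_mono[OF l_le])
    then have "r u' (s v1) \<le> r u' (s (r v' (s w')))" by (rule r_mono2)
    then show "r u' (s v1) \<le> u" using h1 by (rule order.trans)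
    show "v1 \<le> v" using h2 unfolding v1_def .
  qed
  finally show ?thesis by (simp add: B3_def)
qed

lemma B3Q3_T3:
  assumes "(u',v',w') \<in> B3 x" "(u',v',w') \<in> Q3 y"
  shows "(u',v',w') \<in> T3 (mult x y)"
proof -
  define z where "z = r (mult u' v') (s w')"
  have h1: "z \<le> x" and h2: "l (s (invl (mult u' v'))) w' \<le> y"
    using assms by (auto simp: B3_def Q3_def z_def)
  have "mult (mult u' v') w' = mult z w'" unfolding z_def by (rule mult_s[symmetric])
  also have "\<dots> = mult z (l (s (invl z)) w')" by (rule mult_sinv[symmetric])
  also have "\<dots> \<le> mult x y"
  proof (rule mult_mono[OF h1])
    have "s (invl z) = inf (s w') (s (invl (mult u' v')))" unfolding z_def by (simp add: invl_r s_equiv)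
    then have "s (invl z) \<le> s (invl (mult u' v'))" by simp
    then have "l (s (invl z)) w' \<le> l (s (invl (mult u' v'))) w'" by (rule l_mono1)
    then show "l (s (invl z)) w' \<le> y" using h2 by (rule order.trans)
  qed
  finally show ?thesis by (simp add: T3_def)
qed

lemma Q23'_B3':
  assumes "(u',v',w') \<in> Q2 u" "(u',v',w') \<in> Q3' v"
  shows "(u',v',w') \<in> B3' (mult u v)"
proof -
  define b where "b = s (invl u')"
  define v1 where "v1 = l b v'"
  define v2 where "v2 = r v1 (s w')"
  have h1: "v2 \<le> u" and h2: "l (s (invl v1)) w' \<le> v"
    using assms by (auto simp: Q2_def Q3'_def v2_def v1_def b_def lr)
  have "l b (mult v' w') = mult v1 w'" unfolding v1_def by (rule mult_l[symmetric])
  also have "\<dots> = mult v2 w'" unfolding v2_def by (rule mult_s[symmetric])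
  also have "\<dots> = mult v2 (l (s (invl v2)) w')" by (rule mult_sinv[symmetric])
  also have "\<dots> \<le> mult u v"
  proof (rule mult_mono[OF h1])
    have "s (invl v2) = inf (s w') (s (invl v1))" unfolding v2_def by (simp add: invl_r s_equiv)
    then have "s (invl v2) \<le> s (invl v1)" by simp
    then have "l (s (invl v2)) w' \<le> l (s (invl v1)) w'" by (rule l_mono1)
    then show "l (s (invl v2)) w' \<le> v" using h2 by (rule order.trans)
  qed
  finally show ?thesis by (simp add: B3'_def b_def)
qed

lemma Q1'B3'_T3:
  assumes "(u',v',w') \<in> Q1' x" "(u',v',w') \<in> B3' y"
  shows "(u',v',w') \<in> T3 (mult x y)"
proof -
  define m where "m = mult v' w'"
  define z where "z = r u' (s m)"
  have h1: "z \<le> x" and h2: "l (s (invl u')) m \<le> y"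
    using assms by (auto simp: Q1'_def B3'_def z_def m_def)
  have "mult (mult u' v') w' = mult u' m" unfolding m_def by (rule assoc)
  also have "\<dots> = mult z m" unfolding z_def by (rule mult_s[symmetric])
  also have "\<dots> = mult z (l (s (invl z)) m)" by (rule mult_sinv[symmetric])
  also have "\<dots> \<le> mult x y"
  proof (rule mult_mono[OF h1])
    have "s (invl z) = inf (s m) (s (invl u'))" unfolding z_def by (simp add: invl_r s_equiv)
    then have "s (invl z) \<le> s (invl u')" by simp
    then have "l (s (invl z)) m \<le> l (s (invl u')) m" by (rule l_mono1)
    then show "l (s (invl z)) m \<le> y" using h2 by (rule order.trans)
  qed
  finally show ?thesis by (simp add: T3_def)
qed

lemma gen_p123: "(u,v,w) \<in> tens3 l r u top top \<inter> tens3 l r top v top \<inter> tens3 l r top top w"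
  by (intro IntI c3_down[OF tens3_closed tens3_gen] order_refl top_greatest)

lemma LHS_eq:
  "Sup3 l r {Sup3 l r {tens3 l r u top top \<inter> tens3 l r top v top | u v. (u,v) \<in> Rm x} \<inter> tens3 l r top top y
      | x y. (x,y) \<in> Rm c} = T3 c"
proof
  show "Sup3 l r {Sup3 l r {tens3 l r u top top \<inter> tens3 l r top v top | u v. (u,v) \<in> Rm x} \<inter> tens3 l r top top y
      | x y. (x,y) \<in> Rm c} \<subseteq> T3 c"
  proof (rule Sup3_least[OF T3_closed])
    fix A assume "A \<in> {Sup3 l r {tens3 l r u top top \<inter> tens3 l r top v top | u v. (u,v) \<in> Rm x} \<inter> tens3 l r top top y
      | x y. (x,y) \<in> Rm c}"
    then obtain x y where A: "A = Sup3 l r {tens3 l r u top top \<inter> tens3 l r top v top | u v. (u,v) \<in> Rm x} \<inter> tens3 l r top top y"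
      and xy: "mult x y \<le> c" by (auto simp: Rm_def)
    have sub: "Sup3 l r {tens3 l r u top top \<inter> tens3 l r top v top | u v. (u,v) \<in> Rm x} \<subseteq> B3 x"
    proof (rule Sup3_least[OF B3_closed])
      fix A' assume "A' \<in> {tens3 l r u top top \<inter> tens3 l r top v top | u v. (u,v) \<in> Rm x}"
      then obtain u v where A': "A' = tens3 l r u top top \<inter> tens3 l r top v top" and uv: "mult u v \<le> x"
        by (auto simp: Rm_def)
      show "A' \<subseteq> B3 x"
      proof
        fix p assume "p \<in> A'"
        then obtain u' v' w' where p: "p = (u',v',w')" "(u',v',w') \<in> Q1 u" "(u',v',w') \<in> Q2 v"
          using A' p1_Q1 p2_Q2 by (cases p) blast
        then have "(u',v',w') \<in> B3 (mult u v)" using Q12_B3 by blast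
        then show "p \<in> B3 x" using B3_mono[OF uv] p(1) by blast
      qed
    qed
    show "A \<subseteq> T3 c"
    proof
      fix p assume "p \<in> A"
      then obtain u' v' w' where p: "p = (u',v',w')" "(u',v',w') \<in> B3 x" "(u',v',w') \<in> Q3 y"
        using A sub p3_Q3 by (cases p) blast
      then have "(u',v',w') \<in> T3 (mult x y)" using B3Q3_T3 by blast
      then show "p \<in> T3 c" using T3_mono[OF xy] p(1) by blast
    qed
  qed
  show "T3 c \<subseteq> Sup3 l r {Sup3 l r {tens3 l r u top top \<inter> tens3 l r top v top | u v. (u,v) \<in> Rm x} \<inter> tens3 l r top top y
      | x y. (x,y) \<in> Rm c}"
  proof
    fix p assume "p \<in> T3 c"
    then obtain u v w where p: "p = (u,v,w)" "mult (mult u v) w \<le> c" by (auto simp: T3_def)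
    have g: "(u,v,w) \<in> tens3 l r u top top \<inter> tens3 l r top v top \<inter> tens3 l r top top w" by (rule gen_p123)
    have "(u,v,w) \<in> Sup3 l r {tens3 l r u' top top \<inter> tens3 l r top v' top | u' v'. (u',v') \<in> Rm (mult u v)}"
      by (rule Sup3_in[of _ _ _ "tens3 l r u top top \<inter> tens3 l r top v top"]) (use g in \<open>auto simp: Rm_def\<close>)
    then have "(u,v,w) \<in> Sup3 l r {tens3 l r u' top top \<inter> tens3 l r top v' top | u' v'. (u',v') \<in> Rm (mult u v)} \<inter> tens3 l r top top w"
      using g by blast
    then show "p \<in> Sup3 l r {Sup3 l r {tens3 l r u top top \<inter> tens3 l r top v top | u v. (u,v) \<in> Rm x} \<inter> tens3 l r top top y
      | x y. (x,y) \<in> Rm c}" unfolding p(1)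
      by (rule Sup3_in) (use p(2) in \<open>auto simp: Rm_def\<close>)
  qed
qed


lemma RHS_eq:
  "Sup3 l r {tens3 l r x top top \<inter> Sup3 l r {tens3 l r top u top \<inter> tens3 l r top top v | u v. (u,v) \<in> Rm y}
      | x y. (x,y) \<in> Rm c} = T3 c"
proof
  show "Sup3 l r {tens3 l r x top top \<inter> Sup3 l r {tens3 l r top u top \<inter> tens3 l r top top v | u v. (u,v) \<in> Rm y}
      | x y. (x,y) \<in> Rm c} \<subseteq> T3 c"
  proof (rule Sup3_least[OF T3_closed])
    fix A assume "A \<in> {tens3 l r x top top \<inter> Sup3 l r {tens3 l r top u top \<inter> tens3 l r top top v | u v. (u,v) \<in> Rm y}
      | x y. (x,y) \<in> Rm c}"
    then obtain x y where A: "A = tens3 l r x top top \<inter> Sup3 l r {tens3 l r top u top \<inter> tens3 l r top top v | u v. (u,v) \<in> Rm y}"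
      and xy: "mult x y \<le> c" by (auto simp: Rm_def)
    have sub: "Sup3 l r {tens3 l r top u top \<inter> tens3 l r top top v | u v. (u,v) \<in> Rm y} \<subseteq> B3' y"
    proof (rule Sup3_least[OF B3'_closed])
      fix A' assume "A' \<in> {tens3 l r top u top \<inter> tens3 l r top top v | u v. (u,v) \<in> Rm y}"
      then obtain u v where A': "A' = tens3 l r top u top \<inter> tens3 l r top top v" and uv: "mult u v \<le> y"
        by (auto simp: Rm_def)
      show "A' \<subseteq> B3' y"
      proof
        fix p assume "p \<in> A'"
        then obtain u' v' w' where p: "p = (u',v',w')" "(u',v',w') \<in> Q2 u" "(u',v',w') \<in> Q3' v"
          using A' p2_Q2 p3_Q3' by (cases p) blast
        then have "(u',v',w') \<in> B3' (mult u v)" using Q23'_B3' by blast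
        then show "p \<in> B3' y" using B3'_mono[OF uv] p(1) by blast
      qed
    qed
    show "A \<subseteq> T3 c"
    proof
      fix p assume "p \<in> A"
      then obtain u' v' w' where p: "p = (u',v',w')" "(u',v',w') \<in> Q1' x" "(u',v',w') \<in> B3' y"
        using A sub p1_Q1' by (cases p) blast
      then have "(u',v',w') \<in> T3 (mult x y)" using Q1'B3'_T3 by blast
      then show "p \<in> T3 c" using T3_mono[OF xy] p(1) by blast
    qed
  qed
  show "T3 c \<subseteq> Sup3 l r {tens3 l r x top top \<inter> Sup3 l r {tens3 l r top u top \<inter> tens3 l r top top v | u v. (u,v) \<in> Rm y}
      | x y. (x,y) \<in> Rm c}"
  proof
    fix p assume "p \<in> T3 c"
    then obtain u v w where p: "p = (u,v,w)" "mult u (mult v w) \<le> c" by (auto simp: T3_def assoc)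
    have g: "(u,v,w) \<in> tens3 l r u top top \<inter> tens3 l r top v top \<inter> tens3 l r top top w" by (rule gen_p123)
    have "(u,v,w) \<in> Sup3 l r {tens3 l r top u' top \<inter> tens3 l r top top v' | u' v'. (u',v') \<in> Rm (mult v w)}"
      by (rule Sup3_in[of _ _ _ "tens3 l r top v top \<inter> tens3 l r top top w"]) (use g in \<open>auto simp: Rm_def\<close>)
    then have "(u,v,w) \<in> tens3 l r u top top \<inter> Sup3 l r {tens3 l r top u' top \<inter> tens3 l r top top v' | u' v'. (u',v') \<in> Rm (mult v w)}"
      using g by blast
    then show "p \<in> Sup3 l r {tens3 l r x top top \<inter> Sup3 l r {tens3 l r top u top \<inter> tens3 l r top top v | u v. (u,v) \<in> Rm y}
      | x y. (x,y) \<in> Rm c}" unfolding p(1)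
      by (rule Sup3_in) (use p(2) in \<open>auto simp: Rm_def\<close>)
  qed
qed

lemma mx_eq: "m_x_id_star l r mult (m_star l r mult c) = T3 c"
  unfolding m_x_id_star_def pair3_star_def pair_star_def p1_star_def p2_star_def p3_star_def comp_def m_star_Rm
  using LHS_eq unfolding Rm_def by simp

lemma xm_eq: "id_x_m_star l r mult (m_star l r mult c) = T3 c"
  unfolding id_x_m_star_def pair3_star_def pair_star_def p1_star_def p2_star_def p3_star_def comp_def m_star_Rm
  using RHS_eq unfolding Rm_def by simp


lemma inf_ltop: "inf (l a top) y = l a y"
  by (simp add: inf_l)
lemma image_Collect2: "f ` {g x y | x y. P x y} = {f (g x y) | x y. P x y}"
  by auto

lemma Rm_fun: "m_star l r mult = Rm"
  by (rule ext) (rule m_star_Rm)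
lemma pi1_fun: "pi1_star l r = P1"
  by (rule ext) (simp add: pi1_star_def tens_P1)
lemma pi2_fun: "pi2_star l r = P2"
  by (rule ext) (simp add: pi2_star_def tens_P2)

lemma l_inf_top: "l (inf a b) top = inf (l a top) (l b top)"
  by (simp add: l_inf inf_ltop)

lemma fh_d: "frame_hom (d_star l)"
  unfolding frame_hom_def frame_hom_into_def d_star_def
  by (simp add: l_Sup1 l_top l_inf_top)

lemma fh_i: "frame_hom (i_star invl)"
  unfolding frame_hom_def frame_hom_into_def i_star_def
  by (simp add: invl_Sup invl_inf invl_top)

lemma fh_rr: "frame_hom (r_star l invl)"
  unfolding frame_hom_def frame_hom_into_def r_star_def i_star_def d_star_def comp_def
  by (simp add: l_Sup1 l_top invl_Sup invl_inf invl_top image_image l_inf_top)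

lemma fh_u: "frame_hom (u_star ups)"
  unfolding u_star_def by (rule ups_hom)

lemma fh_m: "frame_hom_into (OG2 l r) (Sup2 l r) (\<inter>) UNIV (m_star l r mult)"
  unfolding frame_hom_into_def Rm_fun
proof (intro conjI allI)
  show "Rm x \<in> OG2 l r" for x by (simp add: OG2_def Rm_closed)
  show "Rm (Sup X) = Sup2 l r (Rm ` X)" for X by (rule Rm_Sup)
  show "Rm (inf x y) = Rm x \<inter> Rm y" for x y by (auto simp: Rm_def)
  show "Rm top = UNIV" by (auto simp: Rm_def)
qed

lemma fh_pi1: "frame_hom_into (OG2 l r) (Sup2 l r) (\<inter>) UNIV (pi1_star l r)"
  unfolding frame_hom_into_def pi1_fun
proof (intro conjI allI)
  show "P1 x \<in> OG2 l r" for x by (simp add: OG2_def P1_closed)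
  show "P1 (Sup X) = Sup2 l r (P1 ` X)" for X by (rule P1_Sup)
  show "P1 (inf x y) = P1 x \<inter> P1 y" for x y by (auto simp: P1_def)
  show "P1 top = UNIV" by (auto simp: P1_def)
qed

lemma fh_pi2: "frame_hom_into (OG2 l r) (Sup2 l r) (\<inter>) UNIV (pi2_star l r)"
  unfolding frame_hom_into_def pi2_fun
proof (intro conjI allI)
  show "P2 x \<in> OG2 l r" for x by (simp add: OG2_def P2_closed)
  show "P2 (Sup X) = Sup2 l r (P2 ` X)" for X by (rule P2_Sup)
  show "P2 (inf x y) = P2 x \<inter> P2 y" for x y by (auto simp: P2_def)
  show "P2 top = UNIV" by (auto simp: P2_def)
qed

lemma pullback: "pi1_star l r \<circ> r_star l invl = pi2_star l r \<circ> d_star l"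
proof (rule ext)
  fix a
  have "invl (l a top) = r top a" by (simp add: invl_l invl_top)
  then show "(pi1_star l r \<circ> r_star l invl) a = (pi2_star l r \<circ> d_star l) a"
    by (simp add: pi1_star_def pi2_star_def r_star_def i_star_def d_star_def tens_rel)
qed

lemma md: "m_star l r mult \<circ> d_star l = pi1_star l r \<circ> d_star l"
proof (rule ext)
  fix a
  have "Rm (l a top) = P1 (l a top)"
    by (auto simp: Rm_def P1_def s_adj[symmetric] s_stable)
  then show "(m_star l r mult \<circ> d_star l) a = (pi1_star l r \<circ> d_star l) a"
    by (simp add: Rm_fun pi1_fun d_star_def)
qed

lemma mrr_core: "mult x y \<le> invl (l a top) \<longleftrightarrow> l (s (invl x)) y \<le> invl (l a top)"
proof -
  have "mult x y \<le> invl (l a top) \<longleftrightarrow> mult (invl y) (invl x) \<le> l a top"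
    by (metis invl_le_iff invl_invl invl_mult)
  also have "\<dots> \<longleftrightarrow> s (r (invl y) (s (invl x))) \<le> a" by (simp add: s_adj[symmetric] s_stable)
  also have "\<dots> \<longleftrightarrow> r (invl y) (s (invl x)) \<le> l a top" by (simp add: s_adj)
  also have "\<dots> \<longleftrightarrow> l (s (invl x)) y \<le> invl (l a top)"
    by (metis invl_le_iff invl_invl invl_r)
  finally show ?thesis .
qed

lemma mrr: "m_star l r mult \<circ> r_star l invl = pi2_star l r \<circ> r_star l invl"
proof (rule ext)
  fix a
  have "Rm (invl (l a top)) = P2 (invl (l a top))"
    by (auto simp: Rm_def P2_def mrr_core)
  then show "(m_star l r mult \<circ> r_star l invl) a = (pi2_star l r \<circ> r_star l invl) a"
    by (simp add: Rm_fun pi2_fun r_star_def i_star_def d_star_def)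
qed

lemma U1: "pair_star Sup inf (d_star l \<circ> u_star ups) id \<circ> m_star l r mult = id"
proof (rule ext)
  fix c
  have "Sup {l (ups x) y | x y. mult x y \<le> c} = c" using unit_laws unfolding unit_laws_def by blast
  then show "(pair_star Sup inf (d_star l \<circ> u_star ups) id \<circ> m_star l r mult) c = id c"
    by (simp add: pair_star_def Rm_fun Rm_def d_star_def u_star_def inf_ltop)
qed

lemma U2_core: "Sup {r x (ups y) | x y. mult x y \<le> c} = c"
proof -
  have "invl (Sup {r x (ups y) | x y. mult x y \<le> c}) = Sup {l (ups y) (invl x) | x y. mult x y \<le> c}"
    by (simp add: invl_Sup image_Collect2 invl_r)
  also have "{l (ups y) (invl x) | x y. mult x y \<le> c} = {l (ups x) y | x y. mult x y \<le> invl c}"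
  proof (rule set_eqI, rule iffI)
    fix z assume "z \<in> {l (ups y) (invl x) | x y. mult x y \<le> c}"
    then obtain x y where z: "z = l (ups y) (invl x)" "mult x y \<le> c" by blast
    have "z = l (ups (invl y)) (invl x)" using z by (simp add: ups_invl)
    moreover have "mult (invl y) (invl x) \<le> invl c" using z(2) by (simp add: invl_mult[symmetric] invl_le_iff)
    ultimately show "z \<in> {l (ups x) y | x y. mult x y \<le> invl c}" by blast
  next
    fix z assume "z \<in> {l (ups x) y | x y. mult x y \<le> invl c}"
    then obtain x y where z: "z = l (ups x) y" "mult x y \<le> invl c" by blast
    have "z = l (ups (invl x)) (invl (invl y))" using z by (simp add: ups_invl invl_invl)
    moreover have "mult (invl y) (invl x) \<le> c" using z(2)
      by (metis invl_mult invl_le_iff invl_invl)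
    ultimately show "z \<in> {l (ups y) (invl x) | x y. mult x y \<le> c}" by blast
  qed
  also have "Sup {l (ups x) y | x y. mult x y \<le> invl c} = invl c"
    using unit_laws unfolding unit_laws_def by blast
  finally show ?thesis by (simp add: invl_inj)
qed

lemma U2: "pair_star Sup inf id (r_star l invl \<circ> u_star ups) \<circ> m_star l r mult = id"
proof (rule ext)
  fix c
  have e: "inf x (invl (l a top)) = r x a" for x a
    by (metis inf_commute inf_r inf_top_left invl_l invl_top)
  show "(pair_star Sup inf id (r_star l invl \<circ> u_star ups) \<circ> m_star l r mult) c = id c"
    by (simp add: pair_star_def Rm_fun Rm_def r_star_def i_star_def d_star_def u_star_def e U2_core)
qed

lemma I1_core: "Sup {inf x (invl y) | x y. mult x y \<le> c} = l (ups c) top"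
proof -
  have "{inf x (invl y) | x y. mult x y \<le> c} = {inf x y | x y. mult x (invl y) \<le> c}"
  proof (rule set_eqI, rule iffI)
    fix z assume "z \<in> {inf x (invl y) | x y. mult x y \<le> c}"
    then obtain x y where z: "z = inf x (invl y)" "mult x y \<le> c" by blast
    then have "mult x (invl (invl y)) \<le> c" by (simp add: invl_invl)
    then show "z \<in> {inf x y | x y. mult x (invl y) \<le> c}" using z(1) by blast
  next
    fix z assume "z \<in> {inf x y | x y. mult x (invl y) \<le> c}"
    then obtain x y where z: "z = inf x y" "mult x (invl y) \<le> c" by blast
    then have "z = inf x (invl (invl y))" by (simp add: invl_invl)
    then show "z \<in> {inf x (invl y) | x y. mult x y \<le> c}" using z(2) by blast
  qed
  then show ?thesis using inverse_law[unfolded inverse_law_def, rule_format, of c] by simp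
qed

lemma I1: "pair_star Sup inf id (i_star invl) \<circ> m_star l r mult = d_star l \<circ> u_star ups"
  by (rule ext) (simp add: pair_star_def Rm_fun Rm_def i_star_def d_star_def u_star_def I1_core)

lemma I2: "pair_star Sup inf (i_star invl) id \<circ> m_star l r mult = r_star l invl \<circ> u_star ups"
proof (rule ext)
  fix c
  let ?A = "{inf (invl x) y | x y. mult x y \<le> c}"
  let ?B = "{inf x (invl y) | x y. mult x y \<le> c}"
  have "invl ` ?A = ?B"
    unfolding image_Collect2 by (simp only: invl_inf invl_invl)
  then have e: "invl (Sup ?A) = Sup ?B" by (simp only: invl_Sup)
  have "Sup ?A = invl (invl (Sup ?A))" by (simp only: invl_invl)
  also have "\<dots> = invl (l (ups c) top)" by (simp only: e I1_core)
  finally have "Sup ?A = invl (l (ups c) top)" .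
  then show "(pair_star Sup inf (i_star invl) id \<circ> m_star l r mult) c = (r_star l invl \<circ> u_star ups) c"
    by (simp add: pair_star_def Rm_fun Rm_def i_star_def r_star_def d_star_def u_star_def)
qed

lemma open_d: "open_map (d_star l)"
  unfolding open_map_def
proof (intro exI[of _ s] conjI allI)
  fix x b
  show "s x \<le> b \<longleftrightarrow> x \<le> d_star l b" by (simp add: d_star_def s_adj)
  have "inf x (l b top) = l b x" by (metis inf_commute inf_ltop)
  then have "s (inf x (l b top)) = inf b (s x)" by (simp only: s_equiv)
  then show "s (inf x (d_star l b)) = inf (s x) b" unfolding d_star_def by (metis inf_commute)
qed

lemma main: "assoc_graph_is_open_localic_groupoid l r mult invl ups"
  unfolding assoc_graph_is_open_localic_groupoid_def assoc_graph_is_localic_groupoid_def Let_def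
proof (intro conjI)
  show "i_star invl \<circ> i_star invl = id" by (rule ext) (simp add: i_star_def invl_invl)
  show "i_star invl \<circ> d_star l = r_star l invl" by (simp add: r_star_def)
  show "i_star invl \<circ> r_star l invl = d_star l" by (rule ext) (simp add: r_star_def i_star_def invl_invl)
  show "u_star ups \<circ> d_star l = id" by (rule ext) (simp add: u_star_def d_star_def ups_l)
  show "u_star ups \<circ> r_star l invl = id" by (rule ext) (simp add: u_star_def r_star_def i_star_def d_star_def ups_l ups_invl)
  show "m_x_id_star l r mult \<circ> m_star l r mult = id_x_m_star l r mult \<circ> m_star l r mult"
    by (rule ext) (simp add: mx_eq xm_eq)
qed (fact fh_d fh_rr fh_i fh_u fh_m fh_pi1 fh_pi2 pullback md mrr U1 U2 I1 I2 open_d)+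

end


theorem theorem5p6:
  fixes lact :: "'a::frame \<Rightarrow> 'q::frame \<Rightarrow> 'q"
    and ract :: "'q \<Rightarrow> 'a \<Rightarrow> 'q"
    and mult :: "'q \<Rightarrow> 'q \<Rightarrow> 'q"
    and invl :: "'q \<Rightarrow> 'q"
    and ups :: "'q \<Rightarrow> 'a"
  assumes "groupoid_quantale lact ract mult invl ups"
  shows "assoc_graph_is_open_localic_groupoid lact ract mult invl ups"
proof -
  from assms obtain s where
    mu: "multiplicative lact ract mult" and es: "equivariant_support lact mult invl s"
    and rb: "reflexive_bqf lact ract mult invl ups" and ul: "unit_laws lact mult ups"
    and il: "inverse_law lact mult invl ups"
    unfolding groupoid_quantale_def by blast
  from rb have rb1: "based_quantal_frame lact ract mult invl" and fh: "frame_hom ups"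
    and u12: "\<forall>a. ups (lact a top) = a \<and> ups (ract top a) = a"
    unfolding reflexive_bqf_def by auto
  have u1: "\<forall>a. ups (lact a top) = a" using u12 by simp
  have u2: "\<forall>a. ups (ract top a) = a" using u12 by simp
  have "gq lact ract mult invl ups s"
    using mu es rb1 fh u1 u2 ul il
    unfolding gq_def equivariant_support_def support_def based_quantal_frame_def
      involutive_AA_quantale_def AA_quantale_def AA_bimodule_def
    apply (elim conjE)
    apply (intro conjI)
    apply assumption+
    done
  then interpret gq lact ract mult invl ups s .
  show ?thesis by (rule main)
qed

end
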